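(* Let $M=G/\Gamma$ be a 2-step nilmanifold with invariant abelian complex structure and $\dim_{\mathbb C}\mathfrak c^{1,0}=1$; let $\bar\rho$ span $\mathfrak c^{*(0,1)}$, $W\in\mathfrak c^{1,0}$, $T\in\mathfrak t^{1,0}$ and $\Lambda_1=W\wedge T$. Suppose that $\mathrm{ad}_{\Lambda_1}\bar\rho$ is $\bar\partial$-exact in $B^{1,1}$. Then for all $p,q$, $\mathrm{ad}_{\Lambda_1}$ maps every $\bar\partial$-closed element of $B^{p,q}$ to a $\bar\partial$-exact element of $B^{p+1,q}$; i.e. $\mathrm{ad}_{\Lambda_1}$ induces the zero map $H^q(\mathfrak g^{p,0})\to H^q(\mathfrak g^{p+1,0})$.
   Context: $G$ is a simply connected nilpotent Lie group with Lie algebra $\mathfrak g$, $\Gamma$ a lattice, 2-step: $[\mathfrak g,\mathfrak g]\subseteq\mathfrak c$ (center). $J$ is a left-invariant abelian complex structure ($J^2=-1$, $[JA,JB]=[A,B]$), so $\mathfrak g^{1,0}$ is abelian. $\mathfrak g^{1,0}=\mathfrak t^{1,0}\oplus\mathfrak c^{1,0}$ with $\mathfrak c^{1,0}$ the $(1,0)$-part of the center, basis $W_\ell$, and $\mathfrak t^{1,0}$ with basis $T_k$, such that the only nonzero brackets are $[\bar T_k,T_j]=\sum_\ell E^\ell_{kj}W_\ell-\sum_\ell\bar E^\ell_{jk}\bar W_\ell$; dual basis $\omega^k,\rho^\ell$ with $d\omega^k=0$, $d\rho^\ell=\sum E^\ell_{ji}\omega^i\wedge\bar\omega^j$; $\mathfrak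 t^{*(0,1)}=\mathrm{span}\{\bar\omega^k\}$, $\mathfrak c^{*(0,1)}=\mathrm{span}\{\bar\rho^\ell\}$. $B^{p,q}=\wedge^p\mathfrak g^{1,0}\otimes\wedge^q\mathfrak g^{*(0,1)}$ with $\bar\partial:B^{p,q}\to B^{p,q+1}$ the Lie algebroid (Dolbeault) differential (on $(0,q)$-forms the $(0,q+1)$-part of $d$; for $V\in\mathfrak g^{1,0}$, $(\bar\partial V)(\bar X)$ is the $(1,0)$-part of $[\bar X,V]$; extended as graded derivation) and the Schouten bracket (graded extension of the Lie bracket on $\mathfrak g^{1,0}$, $[V,\bar\omega]=\iota_Vd\bar\omega$, $[\bar\omega_1,\bar\omega_2]=0$); $\mathrm{ad}_A=[A,\cdot]$. $H^q(\mathfrak g^{p,0})$ is the $\bar\partial$-cohomology of $B^{p,\bullet}$ in degree $q$. *)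

theory Defs
  imports Complex_Main
begin

text \<open>
Coordinate model.  g^{1,0} has basis V_0,...,V_n with V_k = T_k (k < n) and
V_n = W (so dim c^{1,0} = 1); g^{*(0,1)} has the dual conjugate basis
phibar^0,...,phibar^n with phibar^k = conj omega^k (k < n), phibar^n = conj rho.
The structure constants are E k j = E^1_{kj} (k, j < n).

The bigraded algebra B = (+)_{p,q} B^{p,q} is the exterior (supercommutative)
algebra on the 2(n+1) odd generators; generator V_i is encoded by the number i
(i <= n) and generator phibar^k by the number n+1+k.  A basis monomial is the
finite set S of its generators, written in increasing order; an element of B is
a coefficient function on such sets.
\<close>

type_synonym belt = "nat set \<Rightarrow> complex"

definition gens :: "nat \<Rightarrow> nat set" where
  "gens n = {..<2 * Suc n}"

definition vidx :: "nat \<Rightarrow> nat \<Rightarrow> nat" where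
  "vidx n i = i"

definition fidx :: "nat \<Rightarrow> nat \<Rightarrow> nat" where
  "fidx n k = Suc n + k"

definition bas :: "nat set \<Rightarrow> belt" where
  "bas S = (\<lambda>U. if U = S then 1 else 0)"

definition zeroB :: belt where "zeroB = (\<lambda>U. 0)"

definition addB :: "belt \<Rightarrow> belt \<Rightarrow> belt" where
  "addB f g = (\<lambda>U. f U + g U)"

definition smultB :: "complex \<Rightarrow> belt \<Rightarrow> belt" where
  "smultB c f = (\<lambda>U. c * f U)"

text \<open>Sign of e_S \<and> e_T: number of pairs (s,t), s in S, t in T, with t < s.\<close>
definition ninv :: "nat set \<Rightarrow> nat set \<Rightarrow> nat" where
  "ninv S T = card {(s, t). s \<in> S \<and> t \<in> T \<and> t < s}"

definition wedge :: "nat \<Rightarrow> belt \<Rightarrow> belt \<Rightarrow> belt" where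
  "wedge n f g = (\<lambda>U. \<Sum>S\<in>Pow (gens n). \<Sum>T\<in>Pow (gens n).
      if S \<inter> T = {} \<and> S \<union> T = U then (-1) ^ ninv S T * f S * g T else 0)"

text \<open>Extension of an odd (total degree +1) graded derivation D, given on the
generators by D s (an even element), to all of B:
D(x_{s_1} ... x_{s_k}) = \<Sum>_i (-1)^{i-1} x_{s_1}..D(x_{s_i})..x_{s_k}.\<close>
definition dext :: "nat \<Rightarrow> (nat \<Rightarrow> belt) \<Rightarrow> belt \<Rightarrow> belt" where
  "dext n D f = (\<lambda>U. \<Sum>S\<in>Pow (gens n). f S *
      (\<Sum>s\<in>S. (-1) ^ card {t \<in> S. t < s} * wedge n (D s) (bas (S - {s})) U))"

text \<open>Bracket data of g_C (abelian J, 2-step):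
[conj V_k, V_j] = \<Sum>_l acoef l k j V_l + \<Sum>_l bcoef l k j conj V_l, i.e.
[conj T_k, T_j] = E_{kj} W - conj(E_{jk}) conj W, all other brackets of basis
vectors of g^{1,0} + g^{0,1} zero.\<close>
definition acoef :: "nat \<Rightarrow> (nat \<Rightarrow> nat \<Rightarrow> complex) \<Rightarrow> nat \<Rightarrow> nat \<Rightarrow> nat \<Rightarrow> complex" where
  "acoef n E l k j = (if l = n \<and> k < n \<and> j < n then E k j else 0)"

definition bcoef :: "nat \<Rightarrow> (nat \<Rightarrow> nat \<Rightarrow> complex) \<Rightarrow> nat \<Rightarrow> nat \<Rightarrow> nat \<Rightarrow> complex" where
  "bcoef n E l k j = (if l = n \<and> k < n \<and> j < n then - cnj (E j k) else 0)"

definition vecB :: "nat \<Rightarrow> (nat \<Rightarrow> complex) \<Rightarrow> belt" where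
  "vecB n X = (\<lambda>U. \<Sum>j\<le>n. X j * bas {vidx n j} U)"

definition formB :: "nat \<Rightarrow> (nat \<Rightarrow> complex) \<Rightarrow> belt" where
  "formB n c = (\<lambda>U. \<Sum>k\<le>n. c k * bas {fidx n k} U)"

text \<open>dbar on generators.
(dbar V_j)(conj X) = (1,0)-part of [conj X, V_j], so
dbar V_j = \<Sum>_{k,l} acoef l k j V_l \<otimes> phibar^k.
dbar phibar^l = (0,2)-part of d phibar^l, where d phi (X,Y) = - phi([X,Y]);
since [g^{0,1}, g^{0,1}] = 0 (J abelian) this (0,2)-part vanishes.\<close>
definition dbar_gen :: "nat \<Rightarrow> (nat \<Rightarrow> nat \<Rightarrow> complex) \<Rightarrow> nat \<Rightarrow> belt" where
  "dbar_gen n E s = (if s \<le> n then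
      (\<lambda>U. \<Sum>k\<le>n. \<Sum>l\<le>n. acoef n E l k s *
             wedge n (bas {vidx n l}) (bas {fidx n k}) U)
    else zeroB)"

definition dbar :: "nat \<Rightarrow> (nat \<Rightarrow> nat \<Rightarrow> complex) \<Rightarrow> belt \<Rightarrow> belt" where
  "dbar n E = dext n (dbar_gen n E)"

text \<open>Schouten bracket [X, phibar^l] = iota_X d phibar^l for X in g^{1,0}
(coefficient vector X); one computes
iota_{V_j} d phibar^l = \<Sum>_k bcoef l k j phibar^k.\<close>
definition brVF :: "nat \<Rightarrow> (nat \<Rightarrow> nat \<Rightarrow> complex) \<Rightarrow> (nat \<Rightarrow> complex) \<Rightarrow> nat \<Rightarrow> belt" where
  "brVF n E X l = formB n (\<lambda>k. \<Sum>j\<le>n. X j * bcoef n E l k j)"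

text \<open>ad_{X \<and> Y} on generators: [X\<and>Y, x] = X \<and> [Y,x] + [X,x] \<and> Y
(Gerstenhaber sign conventions); [X,V] = 0 since g^{1,0} is abelian.\<close>
definition ad_gen :: "nat \<Rightarrow> (nat \<Rightarrow> nat \<Rightarrow> complex) \<Rightarrow> (nat \<Rightarrow> complex) \<Rightarrow> (nat \<Rightarrow> complex)
    \<Rightarrow> nat \<Rightarrow> belt" where
  "ad_gen n E X Y s = (if s \<le> n then zeroB else
      addB (wedge n (vecB n X) (brVF n E Y (s - Suc n)))
           (wedge n (brVF n E X (s - Suc n)) (vecB n Y)))"

text \<open>ad_{X\<and>Y} = [X \<and> Y, -], a derivation of total degree +1 (|X\<and>Y| - 1 = 1).\<close>
definition adL :: "nat \<Rightarrow> (nat \<Rightarrow> nat \<Rightarrow> complex) \<Rightarrow> (nat \<Rightarrow> complex) \<Rightarrow> (nat \<Rightarrow> complex)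
    \<Rightarrow> belt \<Rightarrow> belt" where
  "adL n E X Y = dext n (ad_gen n E X Y)"

definition inB :: "nat \<Rightarrow> nat \<Rightarrow> nat \<Rightarrow> belt \<Rightarrow> bool" where
  "inB n p q f \<longleftrightarrow> (\<forall>U. f U \<noteq> 0 \<longrightarrow>
      U \<subseteq> gens n \<and> card (U \<inter> {..n}) = p \<and> card (U - {..n}) = q)"

definition dbar_closed :: "nat \<Rightarrow> (nat \<Rightarrow> nat \<Rightarrow> complex) \<Rightarrow> nat \<Rightarrow> nat \<Rightarrow> belt \<Rightarrow> bool" where
  "dbar_closed n E p q f \<longleftrightarrow> inB n p q f \<and> dbar n E f = zeroB"

definition dbar_exact :: "nat \<Rightarrow> (nat \<Rightarrow> nat \<Rightarrow> complex) \<Rightarrow> nat \<Rightarrow> nat \<Rightarrow> belt \<Rightarrow> bool" where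
  "dbar_exact n E p q f \<longleftrightarrow> inB n p q f \<and>
      ((q = 0 \<and> f = zeroB) \<or> (0 < q \<and> (\<exists>g. inB n p (q - 1) g \<and> dbar n E g = f)))"

text \<open>The real Lie algebra g, identified with complex coordinate vectors z
(X = \<Sum>_i z_i V_i + conj), has bracket [z,u] = lbr(z,u) W + conj, where
lbr(z,u) = \<Sum>_{i,j<n} E_{ij} (conj z_i u_j - conj u_i z_j).\<close>
definition lbr :: "nat \<Rightarrow> (nat \<Rightarrow> nat \<Rightarrow> complex) \<Rightarrow> (nat \<Rightarrow> complex) \<Rightarrow> (nat \<Rightarrow> complex) \<Rightarrow> complex" where
  "lbr n E z u = (\<Sum>i<n. \<Sum>j<n. E i j * (cnj (z i) * u j - cnj (u i) * z j))"

definition realbr :: "nat \<Rightarrow> (nat \<Rightarrow> nat \<Rightarrow> complex) \<Rightarrow> (nat \<Rightarrow> complex) \<Rightarrow> (nat \<Rightarrow> complex) \<Rightarrow> (nat \<Rightarrow> complex)" where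
  "realbr n E z u = (\<lambda>j. if j = n then lbr n E z u else 0)"

text \<open>Existence of a lattice (Malcev): g has a real basis b_0..b_{2n+1}
with rational structure constants.\<close>
definition has_lattice :: "nat \<Rightarrow> (nat \<Rightarrow> nat \<Rightarrow> complex) \<Rightarrow> bool" where
  "has_lattice n E \<longleftrightarrow> (\<exists>b :: nat \<Rightarrow> nat \<Rightarrow> complex.
     (\<forall>r :: nat \<Rightarrow> real. (\<forall>j\<le>n. (\<Sum>a<2 * Suc n. of_real (r a) * b a j) = 0)
         \<longrightarrow> (\<forall>a<2 * Suc n. r a = 0)) \<and>
     (\<forall>a<2 * Suc n. \<forall>c<2 * Suc n. \<exists>q :: nat \<Rightarrow> real. (\<forall>m. q m \<in> \<rat>) \<and>
         (\<forall>j\<le>n. realbr n E (b a) (b c) j = (\<Sum>m<2 * Suc n. of_real (q m) * b m j))))"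

text \<open>The (1,0)-part of the centre is exactly span W: a real element z of g is
central only if its t-components vanish.\<close>
definition centre_is_W :: "nat \<Rightarrow> (nat \<Rightarrow> nat \<Rightarrow> complex) \<Rightarrow> bool" where
  "centre_is_W n E \<longleftrightarrow> (\<forall>z. (\<forall>u. lbr n E z u = 0) \<longrightarrow> (\<forall>k<n. z k = 0))"

end

theory Submission
  imports Defs
begin

definition supp :: "nat \<Rightarrow> belt \<Rightarrow> bool" where
  "supp n f \<longleftrightarrow> (\<forall>U. f U \<noteq> 0 \<longrightarrow> U \<subseteq> gens n)"

definition lc :: "'i set \<Rightarrow> ('i \<Rightarrow> complex) \<Rightarrow> ('i \<Rightarrow> belt) \<Rightarrow> belt" where
  "lc I c x = (\<lambda>U. \<Sum>i\<in>I. c i * x i U)"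

lemma finite_gens[simp]: "finite (gens n)" by (simp add: gens_def)

lemma wedge_bas:
  assumes "A \<subseteq> gens n" "B \<subseteq> gens n"
  shows "wedge n (bas A) (bas B) U = (if A \<inter> B = {} \<and> A \<union> B = U then (-1) ^ ninv A B else 0)"
proof -
  have "wedge n (bas A) (bas B) U = (\<Sum>S\<in>Pow (gens n). \<Sum>T\<in>Pow (gens n).
      if T = B then (if S = A then (if A \<inter> B = {} \<and> A \<union> B = U then (-1) ^ ninv A B else 0) else 0) else 0)"
    unfolding wedge_def bas_def by (intro sum.cong refl) auto
  also have "\<dots> = (if A \<inter> B = {} \<and> A \<union> B = U then (-1) ^ ninv A B else 0)"
    using assms by (simp add: sum.delta)
  finally show ?thesis .
qed

lemma ifsum1: "(if C then a * (\<Sum>i\<in>I. c i * x i S) * b else (0::complex)) = (\<Sum>i\<in>I. c i * (if C then a * x i S * b else 0))"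
  by (auto simp: sum_distrib_left sum_distrib_right algebra_simps)
lemma ifsum2: "(if C then a * b * (\<Sum>i\<in>I. c i * x i S) else (0::complex)) = (\<Sum>i\<in>I. c i * (if C then a * b * x i S else 0))"
  by (auto simp: sum_distrib_left sum_distrib_right algebra_simps)

lemma swap3: "(\<Sum>a\<in>A. \<Sum>b\<in>B. \<Sum>i\<in>I. f a b i) = (\<Sum>i\<in>I. \<Sum>a\<in>A. \<Sum>b\<in>B. f a b i)"
proof -
  have "(\<Sum>a\<in>A. \<Sum>b\<in>B. \<Sum>i\<in>I. f a b i) = (\<Sum>a\<in>A. \<Sum>i\<in>I. \<Sum>b\<in>B. f a b i)"
    by (rule sum.cong[OF refl], rule sum.swap)
  also have "\<dots> = (\<Sum>i\<in>I. \<Sum>a\<in>A. \<Sum>b\<in>B. f a b i)" by (rule sum.swap)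
  finally show ?thesis .
qed

lemma wedge_left_lc:
  assumes "finite I"
  shows "wedge n (lc I c x) y = lc I c (\<lambda>i. wedge n (x i) y)"
proof (rule ext)
  fix U
  have "wedge n (lc I c x) y U = (\<Sum>S\<in>Pow (gens n). \<Sum>T\<in>Pow (gens n). \<Sum>i\<in>I.
      c i * (if S \<inter> T = {} \<and> S \<union> T = U then (-1) ^ ninv S T * x i S * y T else 0))"
    unfolding wedge_def lc_def by (simp add: ifsum1)
  also have "\<dots> = (\<Sum>i\<in>I. c i * (\<Sum>S\<in>Pow (gens n). \<Sum>T\<in>Pow (gens n).
      (if S \<inter> T = {} \<and> S \<union> T = U then (-1) ^ ninv S T * x i S * y T else 0)))"
    by (subst swap3) (simp add: sum_distrib_left)
  finally show "wedge n (lc I c x) y U = lc I c (\<lambda>i. wedge n (x i) y) U"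
    unfolding lc_def wedge_def .
qed

lemma wedge_right_lc:
  assumes "finite I"
  shows "wedge n y (lc I c x) = lc I c (\<lambda>i. wedge n y (x i))"
proof (rule ext)
  fix U
  have "wedge n y (lc I c x) U = (\<Sum>S\<in>Pow (gens n). \<Sum>T\<in>Pow (gens n). \<Sum>i\<in>I.
      c i * (if S \<inter> T = {} \<and> S \<union> T = U then (-1) ^ ninv S T * y S * x i T else 0))"
    unfolding wedge_def lc_def by (simp add: ifsum2)
  also have "\<dots> = (\<Sum>i\<in>I. c i * (\<Sum>S\<in>Pow (gens n). \<Sum>T\<in>Pow (gens n).
      (if S \<inter> T = {} \<and> S \<union> T = U then (-1) ^ ninv S T * y S * x i T else 0)))"
    by (subst swap3) (simp add: sum_distrib_left)
  finally show "wedge n y (lc I c x) U = lc I c (\<lambda>i. wedge n y (x i)) U"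
    unfolding lc_def wedge_def .
qed

lemma dext_lc:
  assumes "finite I"
  shows "dext n D (lc I c x) = lc I c (\<lambda>i. dext n D (x i))"
proof (rule ext)
  fix U
  have "dext n D (lc I c x) U = (\<Sum>S\<in>Pow (gens n). \<Sum>i\<in>I. c i * (x i S *
      (\<Sum>s\<in>S. (-1) ^ card {t \<in> S. t < s} * wedge n (D s) (bas (S - {s})) U)))"
    unfolding dext_def lc_def by (simp add: sum_distrib_right algebra_simps)
  also have "\<dots> = (\<Sum>i\<in>I. c i * (\<Sum>S\<in>Pow (gens n). (x i S *
      (\<Sum>s\<in>S. (-1) ^ card {t \<in> S. t < s} * wedge n (D s) (bas (S - {s})) U))))"
    by (subst sum.swap) (simp add: sum_distrib_left)
  finally show "dext n D (lc I c x) U = lc I c (\<lambda>i. dext n D (x i)) U"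
    unfolding lc_def dext_def .
qed

lemma expand:
  assumes "supp n f"
  shows "f = lc (Pow (gens n)) f bas"
proof (rule ext)
  fix U
  have "lc (Pow (gens n)) f bas U = (\<Sum>S\<in>Pow (gens n). if U = S then f S else 0)"
    unfolding lc_def bas_def by (intro sum.cong refl) auto
  also have "\<dots> = f U" using assms unfolding supp_def by (auto simp: sum.delta)
  finally show "f U = lc (Pow (gens n)) f bas U" by simp
qed


lemma finite_pairs: "finite A \<Longrightarrow> finite B \<Longrightarrow> finite {(s, t). s \<in> A \<and> t \<in> B \<and> P s t}"
  by (rule finite_subset[of _ "A \<times> B"]) auto

lemma ninv_union_right:
  assumes "finite A" "finite B" "finite C" "B \<inter> C = {}"
  shows "ninv A (B \<union> C) = ninv A B + ninv A C"
proof -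
  have "{(s, t). s \<in> A \<and> t \<in> B \<union> C \<and> t < s} =
        {(s, t). s \<in> A \<and> t \<in> B \<and> t < s} \<union> {(s, t). s \<in> A \<and> t \<in> C \<and> t < s}" by auto
  moreover have "card (\<dots>) = ninv A B + ninv A C"
    unfolding ninv_def using assms by (intro card_Un_disjoint finite_pairs) auto
  ultimately show ?thesis unfolding ninv_def by simp
qed

lemma ninv_union_left:
  assumes "finite A" "finite B" "finite C" "A \<inter> B = {}"
  shows "ninv (A \<union> B) C = ninv A C + ninv B C"
proof -
  have "{(s, t). s \<in> A \<union> B \<and> t \<in> C \<and> t < s} =
        {(s, t). s \<in> A \<and> t \<in> C \<and> t < s} \<union> {(s, t). s \<in> B \<and> t \<in> C \<and> t < s}" by auto
  moreover have "card (\<dots>) = ninv A C + ninv B C"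
    unfolding ninv_def using assms by (intro card_Un_disjoint finite_pairs) auto
  ultimately show ?thesis unfolding ninv_def by simp
qed

lemma ninv_single_left: "ninv {x} T = card {t \<in> T. t < x}"
proof -
  have "{(s, t). s \<in> {x} \<and> t \<in> T \<and> t < s} = (\<lambda>t. (x, t)) ` {t \<in> T. t < x}" by auto
  moreover have "inj_on (\<lambda>t. (x, t)) {t \<in> T. t < x}" by (auto simp: inj_on_def)
  ultimately show ?thesis unfolding ninv_def by (simp add: card_image)
qed

lemma ninv_single_right: "ninv T {x} = card {t \<in> T. x < t}"
proof -
  have "{(s, t). s \<in> T \<and> t \<in> {x} \<and> t < s} = (\<lambda>t. (t, x)) ` {t \<in> T. x < t}" by auto
  moreover have "inj_on (\<lambda>t. (t, x)) {t \<in> T. x < t}" by (auto simp: inj_on_def)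
  ultimately show ?thesis unfolding ninv_def by (simp add: card_image)
qed

lemma ninv_single_swap:
  assumes "finite B" "x \<notin> B"
  shows "ninv {x} B + ninv B {x} = card B"
proof -
  have "{t \<in> B. t < x} \<union> {t \<in> B. x < t} = B" using assms by (auto simp: not_less order.order_iff_strict)
  moreover have "card ({t \<in> B. t < x} \<union> {t \<in> B. x < t}) = card {t \<in> B. t < x} + card {t \<in> B. x < t}"
    using assms by (intro card_Un_disjoint) auto
  ultimately show ?thesis by (simp add: ninv_single_left ninv_single_right)
qed

lemma neg1_eq: "even (a + b) \<Longrightarrow> (-1::complex) ^ a = (-1) ^ b"
  by (auto simp: minus_one_power_iff)

lemma wbas:
  assumes "A \<subseteq> gens n" "B \<subseteq> gens n"
  shows "wedge n (bas A) (bas B) = (if A \<inter> B = {} then smultB ((-1) ^ ninv A B) (bas (A \<union> B)) else zeroB)"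
  unfolding smultB_def zeroB_def by (rule ext, subst wedge_bas[OF assms]) (auto simp: bas_def)

lemma wedge_smult_right: "wedge n f (smultB c g) = smultB c (wedge n f g)"
  unfolding wedge_def smultB_def
  by (rule ext) (simp add: sum_distrib_left if_distrib algebra_simps cong: if_cong)

lemma wedge_smult_left: "wedge n (smultB c f) g = smultB c (wedge n f g)"
  unfolding wedge_def smultB_def
  by (rule ext) (simp add: sum_distrib_left if_distrib algebra_simps cong: if_cong)

lemma wedge_zero_right[simp]: "wedge n f zeroB = zeroB"
  unfolding wedge_def zeroB_def by (rule ext) (simp cong: if_cong)
lemma wedge_zero_left[simp]: "wedge n zeroB f = zeroB"
  unfolding wedge_def zeroB_def by (rule ext) (simp cong: if_cong)

lemma smult_smult: "smultB c (smultB d f) = smultB (c * d) f"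
  unfolding smultB_def by (rule ext) simp

lemma smult_zero[simp]: "smultB c zeroB = zeroB"
  unfolding smultB_def zeroB_def by simp

lemma comm_bas:
  assumes "B \<subseteq> gens n" "R \<subseteq> gens n" "x \<in> gens n" "even (card B)"
  shows "wedge n (bas {x}) (wedge n (bas B) (bas R)) = wedge n (bas B) (wedge n (bas {x}) (bas R))"
proof -
  have fB: "finite B" "finite R" using assms finite_subset[OF _ finite_gens] by auto
  show ?thesis
  proof (cases "B \<inter> R = {} \<and> x \<notin> B \<and> x \<notin> R")
    case True
    have e1: "ninv {x} (B \<union> R) = ninv {x} B + ninv {x} R"
      using True fB by (intro ninv_union_right) auto
    have e2: "ninv B (insert x R) = ninv B {x} + ninv B R"
      using True fB ninv_union_right[of B "{x}" R] by auto
    have e3: "ninv {x} B + ninv B {x} = card B" using True fB ninv_single_swap by auto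
    have "(-1::complex) ^ (ninv B R + ninv {x} (B \<union> R)) = (-1) ^ (ninv {x} R + ninv B (insert x R))"
      by (rule neg1_eq) (use e1 e2 e3 assms(4) in presburger)
    then have sg: "(-1::complex) ^ ninv B R * (-1) ^ ninv {x} (B \<union> R) = (-1) ^ ninv {x} R * (-1) ^ ninv B (insert x R)"
      by (simp add: power_add)
    have "wedge n (bas {x}) (wedge n (bas B) (bas R)) = smultB ((-1) ^ ninv B R * (-1) ^ ninv {x} (B \<union> R)) (bas (insert x (B \<union> R)))"
      using True assms by (simp add: wbas wedge_smult_right smult_smult)
    moreover have "wedge n (bas B) (wedge n (bas {x}) (bas R)) = smultB ((-1) ^ ninv {x} R * (-1) ^ ninv B (insert x R)) (bas (B \<union> insert x R))"
      using True assms by (simp add: wbas wedge_smult_right smult_smult)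
    ultimately show ?thesis using sg by simp
  next
    case False
    then show ?thesis using assms
      by (auto simp: wbas wedge_smult_right)
  qed
qed


definition evsupp :: "nat \<Rightarrow> belt \<Rightarrow> bool" where
  "evsupp n F \<longleftrightarrow> (\<forall>U. F U \<noteq> 0 \<longrightarrow> U \<subseteq> gens n \<and> even (card U))"

lemma lc_cong: "(\<And>i. i \<in> I \<Longrightarrow> c i \<noteq> 0 \<Longrightarrow> x i = y i) \<Longrightarrow> lc I c x = lc I c y"
  unfolding lc_def by (rule ext, rule sum.cong) (auto, metis mult_zero_left)

lemma evsupp_supp: "evsupp n F \<Longrightarrow> supp n F"
  unfolding evsupp_def supp_def by auto

lemma comm_gen:
  assumes "evsupp n F" "R \<subseteq> gens n" "x \<in> gens n"
  shows "wedge n (bas {x}) (wedge n F (bas R)) = wedge n F (wedge n (bas {x}) (bas R))"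
proof -
  have F: "F = lc (Pow (gens n)) F bas" using expand evsupp_supp assms(1) by blast
  have "wedge n (bas {x}) (wedge n F (bas R)) = lc (Pow (gens n)) F (\<lambda>B. wedge n (bas {x}) (wedge n (bas B) (bas R)))"
    by (subst F) (simp add: wedge_left_lc wedge_right_lc)
  also have "\<dots> = lc (Pow (gens n)) F (\<lambda>B. wedge n (bas B) (wedge n (bas {x}) (bas R)))"
    using assms unfolding evsupp_def by (intro lc_cong comm_bas) auto
  also have "\<dots> = wedge n F (wedge n (bas {x}) (bas R))"
    by (subst (2) F) (simp add: wedge_left_lc)
  finally show ?thesis .
qed

lemma dext_bas:
  assumes "S \<subseteq> gens n"
  shows "dext n D (bas S) = lc S (\<lambda>s. (-1) ^ card {t \<in> S. t < s}) (\<lambda>s. wedge n (D s) (bas (S - {s})))"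
proof (rule ext)
  fix U
  have "dext n D (bas S) U = (\<Sum>S'\<in>Pow (gens n). if S' = S then
      (\<Sum>s\<in>S. (-1) ^ card {t \<in> S. t < s} * wedge n (D s) (bas (S - {s})) U) else 0)"
    unfolding dext_def by (intro sum.cong refl) (auto simp: bas_def)
  also have "\<dots> = lc S (\<lambda>s. (-1) ^ card {t \<in> S. t < s}) (\<lambda>s. wedge n (D s) (bas (S - {s}))) U"
    using assms by (simp add: sum.delta lc_def)
  finally show "dext n D (bas S) U = lc S (\<lambda>s. (-1) ^ card {t \<in> S. t < s}) (\<lambda>s. wedge n (D s) (bas (S - {s}))) U" .
qed

lemma dext_zero[simp]: "dext n D zeroB = zeroB"
  unfolding dext_def zeroB_def by simp

lemma dext_smult: "dext n D (smultB c f) = smultB c (dext n D f)"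
  unfolding dext_def smultB_def by (rule ext) (simp add: sum_distrib_left algebra_simps)

lemma ninv_empty_right[simp]: "ninv A {} = 0"
  unfolding ninv_def by simp

lemma wedge_empty_right:
  assumes "supp n F"
  shows "wedge n F (bas {}) = F"
proof -
  have F: "F = lc (Pow (gens n)) F bas" using expand assms by blast
  have "wedge n F (bas {}) = lc (Pow (gens n)) F (\<lambda>A. wedge n (bas A) (bas {}))"
    by (subst F) (simp add: wedge_left_lc)
  also have "\<dots> = lc (Pow (gens n)) F bas"
    by (intro lc_cong) (simp add: wbas smultB_def)
  finally show ?thesis using F by simp
qed

lemma dext_single:
  assumes "x \<in> gens n" "supp n (D x)"
  shows "dext n D (bas {x}) = D x"
proof -
  have [simp]: "{t. t = x \<and> t < x} = {}" by auto
  have "dext n D (bas {x}) = lc {x} (\<lambda>s. (-1) ^ card {t \<in> {x}. t < s}) (\<lambda>s. wedge n (D s) (bas ({x} - {s})))"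
    using assms by (intro dext_bas) auto
  also have "\<dots> = wedge n (D x) (bas {})" unfolding lc_def by simp
  also have "\<dots> = D x" using assms by (simp add: wedge_empty_right)
  finally show ?thesis .
qed


lemma sign_lemma:
  fixes x s :: nat and T :: "nat set"
  assumes "finite T" "x \<notin> T" "s \<in> T"
  shows "(-1::complex) ^ card {t \<in> T. t < x} * (-1) ^ card {t \<in> insert x T. t < s} =
         - ((-1) ^ card {t \<in> T. t < s} * (-1) ^ card {t \<in> T - {s}. t < x})"
proof (cases "x < s")
  case True
  have "{t \<in> insert x T. t < s} = insert x {t \<in> T. t < s}" using True by auto
  then have "card {t \<in> insert x T. t < s} = Suc (card {t \<in> T. t < s})" using assms by simp
  moreover have "{t \<in> T. t < x} = {t \<in> T - {s}. t < x}" using True less_trans[of s x s] by auto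
  ultimately show ?thesis by simp
next
  case False
  then have sx: "s < x" using assms by (cases "s = x") auto
  have "{t \<in> insert x T. t < s} = {t \<in> T. t < s}" using sx by auto
  moreover have "{t \<in> T. t < x} = insert s {t \<in> T - {s}. t < x}" using sx assms by auto
  then have "card {t \<in> T. t < x} = Suc (card {t \<in> T - {s}. t < x})" using assms by simp
  ultimately show ?thesis by simp
qed

lemma addB_apply: "addB f g U = f U + g U" by (simp add: addB_def)
lemma smultB_apply: "smultB c f U = c * f U" by (simp add: smultB_def)
lemma zeroB_apply: "zeroB U = 0" by (simp add: zeroB_def)

lemma leib_bas:
  assumes D: "\<And>s. evsupp n (D s)" and x: "x \<in> gens n" and T: "T \<subseteq> gens n"
  shows "dext n D (wedge n (bas {x}) (bas T)) =
         addB (wedge n (D x) (bas T)) (smultB (-1) (wedge n (bas {x}) (dext n D (bas T))))"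
proof -
  have fT: "finite T" using finite_subset[OF T finite_gens] .
  have R: "wedge n (bas {x}) (dext n D (bas T)) = lc T (\<lambda>s. (-1) ^ card {t \<in> T. t < s})
             (\<lambda>s. wedge n (D s) (wedge n (bas {x}) (bas (T - {s}))))"
    using T fT by (simp add: dext_bas wedge_right_lc, intro lc_cong comm_gen[OF D _ x]) auto
  show ?thesis
  proof (cases "x \<in> T")
    case True
    have Z: "wedge n (bas {x}) (bas T) = zeroB" using True x T by (simp add: wbas)
    have Y: "\<And>s. s \<in> T \<Longrightarrow> wedge n (D s) (wedge n (bas {x}) (bas (T - {s}))) =
       (if s = x then smultB ((-1) ^ card {t \<in> T. t < x}) (wedge n (D x) (bas T)) else zeroB)"
    proof -
      fix s assume s: "s \<in> T"
      show "?thesis s"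
      proof (cases "s = x")
        case True
        have e: "{x} \<union> (T - {x}) = T" using s True by auto
        have c: "{t \<in> T - {x}. t < x} = {t \<in> T. t < x}" by auto
        have T1: "T - {x} \<subseteq> gens n" "{x} \<subseteq> gens n" "{x} \<inter> (T - {x}) = {}" using T x by auto
        have "wedge n (bas {x}) (bas (T - {x})) = smultB ((-1) ^ card {t \<in> T. t < x}) (bas T)"
          using wbas[OF T1(2,1)] T1(3) e c by (simp add: ninv_single_left)
        then show ?thesis using True by (simp add: wedge_smult_right)
      next
        case False
        have T1: "T - {s} \<subseteq> gens n" "{x} \<subseteq> gens n" "{x} \<inter> (T - {s}) \<noteq> {}" using T x False True by auto
        have "wedge n (bas {x}) (bas (T - {s})) = zeroB"
          using wbas[OF T1(2,1)] T1(3) by simp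
        then show ?thesis using False by simp
      qed
    qed
    have "lc T (\<lambda>s. (-1) ^ card {t \<in> T. t < s}) (\<lambda>s. wedge n (D s) (wedge n (bas {x}) (bas (T - {s})))) =
          lc T (\<lambda>s. (-1) ^ card {t \<in> T. t < s}) (\<lambda>s. if s = x then smultB ((-1) ^ card {t \<in> T. t < x}) (wedge n (D x) (bas T)) else zeroB)"
      by (rule lc_cong) (simp add: Y)
    also have "\<dots> = wedge n (D x) (bas T)"
    proof (rule ext)
      fix U
      have "lc T (\<lambda>s. (-1) ^ card {t \<in> T. t < s}) (\<lambda>s. if s = x then smultB ((-1) ^ card {t \<in> T. t < x}) (wedge n (D x) (bas T)) else zeroB) U
         = (\<Sum>s\<in>T. if s = x then (-1) ^ card {t \<in> T. t < x} * ((-1) ^ card {t \<in> T. t < x} * wedge n (D x) (bas T) U) else 0)"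
        unfolding lc_def by (intro sum.cong refl) (auto simp: smultB_apply zeroB_apply)
      also have "\<dots> = wedge n (D x) (bas T) U"
        using True fT by (simp add: sum.delta flip: mult.assoc power_add)
      finally show "lc T (\<lambda>s. (-1) ^ card {t \<in> T. t < s}) (\<lambda>s. if s = x then smultB ((-1) ^ card {t \<in> T. t < x}) (wedge n (D x) (bas T)) else zeroB) U = wedge n (D x) (bas T) U" .
    qed
    finally have "wedge n (bas {x}) (dext n D (bas T)) = wedge n (D x) (bas T)" using R by simp
    then show ?thesis using Z by (rule_tac ext) (simp add: addB_apply smultB_apply zeroB_apply)
  next
    case False
    let ?c = "\<lambda>s. (-1::complex) ^ card {t \<in> T. t < s}"
    let ?c' = "\<lambda>s. (-1::complex) ^ card {t \<in> insert x T. t < s}"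
    have iT: "insert x T \<subseteq> gens n" using x T by auto
    have Z: "wedge n (bas {x}) (bas T) = smultB (?c x) (bas (insert x T))"
      using False x T by (simp add: wbas ninv_single_left)
    have Y: "\<And>s. s \<in> T \<Longrightarrow> wedge n (D s) (wedge n (bas {x}) (bas (T - {s}))) =
       smultB ((-1) ^ card {t \<in> T - {s}. t < x}) (wedge n (D s) (bas (insert x T - {s})))"
    proof -
      fix s assume s: "s \<in> T"
      have e: "insert x T - {s} = {x} \<union> (T - {s})" using s False by auto
      have T1: "T - {s} \<subseteq> gens n" "{x} \<subseteq> gens n" "{x} \<inter> (T - {s}) = {}" using T x False by auto
      have "wedge n (bas {x}) (bas (T - {s})) = smultB ((-1) ^ card {t \<in> T - {s}. t < x}) (bas (insert x T - {s}))"
        using wbas[OF T1(2,1)] T1(3) e by (simp only: ninv_single_left if_True simp_thms)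
      then show "?thesis s" by (simp add: wedge_smult_right)
    qed
    show ?thesis
    proof (rule ext)
      fix U
      have L: "dext n D (wedge n (bas {x}) (bas T)) U =
          ?c x * (?c' x * wedge n (D x) (bas T) U +
            (\<Sum>s\<in>T. ?c' s * wedge n (D s) (bas (insert x T - {s})) U))"
      proof -
        have "insert x T - {x} = T" using False by auto
        moreover have "{t \<in> insert x T. t < x} = {t \<in> T. t < x}" by auto
        ultimately show ?thesis using False fT iT
          by (simp add: Z dext_smult dext_bas smultB_apply lc_def)
      qed
      have Rr: "wedge n (bas {x}) (dext n D (bas T)) U =
          (\<Sum>s\<in>T. ?c s * ((-1) ^ card {t \<in> T - {s}. t < x} * wedge n (D s) (bas (insert x T - {s})) U))"
        unfolding R lc_def by (intro sum.cong refl) (simp add: Y smultB_apply)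
      have "{t \<in> insert x T. t < x} = {t \<in> T. t < x}" by auto
      then have cx: "?c x * ?c' x = 1" by (simp flip: power_add)
      have "?c x * (\<Sum>s\<in>T. ?c' s * wedge n (D s) (bas (insert x T - {s})) U) =
            (\<Sum>s\<in>T. (?c x * ?c' s) * wedge n (D s) (bas (insert x T - {s})) U)"
        by (simp add: sum_distrib_left mult.assoc)
      also have "\<dots> = (\<Sum>s\<in>T. - (?c s * (-1) ^ card {t \<in> T - {s}. t < x}) * wedge n (D s) (bas (insert x T - {s})) U)"
        by (intro sum.cong refl) (simp only: sign_lemma[OF fT False])
      also have "\<dots> = - (\<Sum>s\<in>T. ?c s * ((-1) ^ card {t \<in> T - {s}. t < x} * wedge n (D s) (bas (insert x T - {s})) U))"
        by (simp add: sum_negf mult.assoc)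
      finally have S: "?c x * (\<Sum>s\<in>T. ?c' s * wedge n (D s) (bas (insert x T - {s})) U) = - wedge n (bas {x}) (dext n D (bas T)) U"
        using Rr by simp
      show "dext n D (wedge n (bas {x}) (bas T)) U =
         addB (wedge n (D x) (bas T)) (smultB (-1) (wedge n (bas {x}) (dext n D (bas T)))) U"
        unfolding L addB_apply smultB_apply using S cx
        by (simp add: distrib_left mult.assoc[symmetric])
    qed
  qed
qed


lemma lc_addB: "lc I c (\<lambda>i. addB (X i) (Y i)) = addB (lc I c X) (lc I c Y)"
  unfolding lc_def addB_def by (rule ext) (simp add: distrib_left sum.distrib)

lemma lc_smult: "lc I c (\<lambda>i. smultB k (X i)) = smultB k (lc I c X)"
  unfolding lc_def smultB_def by (rule ext) (simp add: sum_distrib_left algebra_simps)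

lemma leib_single:
  assumes D: "\<And>s. evsupp n (D s)" and x: "x \<in> gens n" and h: "supp n h"
  shows "dext n D (wedge n (bas {x}) h) =
         addB (wedge n (dext n D (bas {x})) h) (smultB (-1) (wedge n (bas {x}) (dext n D h)))"
proof -
  let ?P = "Pow (gens n)"
  have H: "h = lc ?P h bas" using expand h by blast
  have "dext n D (wedge n (bas {x}) h) = lc ?P h (\<lambda>T. dext n D (wedge n (bas {x}) (bas T)))"
    by (subst H) (simp add: wedge_right_lc dext_lc)
  also have "\<dots> = lc ?P h (\<lambda>T. addB (wedge n (D x) (bas T)) (smultB (-1) (wedge n (bas {x}) (dext n D (bas T)))))"
    by (rule lc_cong) (simp add: leib_bas[OF D x])
  also have "\<dots> = addB (wedge n (D x) (lc ?P h bas)) (smultB (-1) (wedge n (bas {x}) (dext n D (lc ?P h bas))))"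
    by (simp add: lc_addB lc_smult wedge_right_lc dext_lc)
  also have "\<dots> = addB (wedge n (dext n D (bas {x})) h) (smultB (-1) (wedge n (bas {x}) (dext n D h)))"
    using H dext_single[OF x evsupp_supp[OF D]] by simp
  finally show ?thesis .
qed

lemma leib_gen:
  assumes D: "\<And>s. evsupp n (D s)" and g: "supp n g" and g1: "\<And>A. g A \<noteq> 0 \<Longrightarrow> \<exists>x\<in>gens n. A = {x}"
    and h: "supp n h"
  shows "dext n D (wedge n g h) = addB (wedge n (dext n D g) h) (smultB (-1) (wedge n g (dext n D h)))"
proof -
  let ?P = "Pow (gens n)"
  have G: "g = lc ?P g bas" using expand g by blast
  have "dext n D (wedge n g h) = lc ?P g (\<lambda>A. dext n D (wedge n (bas A) h))"
    by (subst G) (simp add: wedge_left_lc dext_lc)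
  also have "\<dots> = lc ?P g (\<lambda>A. addB (wedge n (dext n D (bas A)) h) (smultB (-1) (wedge n (bas A) (dext n D h))))"
    by (rule lc_cong) (use g1 leib_single[OF D _ h] in fastforce)
  also have "\<dots> = addB (wedge n (dext n D (lc ?P g bas)) h) (smultB (-1) (wedge n (lc ?P g bas) (dext n D h)))"
    by (simp add: lc_addB lc_smult wedge_left_lc dext_lc)
  also have "\<dots> = addB (wedge n (dext n D g) h) (smultB (-1) (wedge n g (dext n D h)))"
    using G by simp
  finally show ?thesis .
qed


lemma P_in_gens: "Suc n + n \<in> gens n" by (simp add: gens_def)
lemma le_P: "S \<subseteq> gens n \<Longrightarrow> t \<in> S \<Longrightarrow> t \<le> Suc n + n" by (auto simp: gens_def)

lemma dext_onlyP:
  assumes Z: "\<And>s. s \<in> gens n \<Longrightarrow> s \<noteq> Suc n + n \<Longrightarrow> D s = zeroB" and S: "S \<subseteq> gens n"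
  shows "dext n D (bas S) = (if Suc n + n \<in> S then
      smultB ((-1) ^ card (S - {Suc n + n})) (wedge n (D (Suc n + n)) (bas (S - {Suc n + n}))) else zeroB)"
proof (rule ext)
  fix U
  let ?P = "Suc n + n"
  have fS: "finite S" using finite_subset[OF S finite_gens] .
  have "dext n D (bas S) U = (\<Sum>s\<in>S. if s = ?P then (-1) ^ card {t \<in> S. t < s} * wedge n (D s) (bas (S - {s})) U else 0)"
    unfolding dext_bas[OF S] lc_def
    by (intro sum.cong refl) (use Z S in \<open>auto simp: zeroB_apply\<close>)
  also have "\<dots> = (if ?P \<in> S then (-1) ^ card {t \<in> S. t < ?P} * wedge n (D ?P) (bas (S - {?P})) U else 0)"
    using fS by (simp add: sum.delta)
  also have "\<dots> = (if ?P \<in> S then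
      smultB ((-1) ^ card (S - {?P})) (wedge n (D ?P) (bas (S - {?P}))) else zeroB) U"
  proof -
    have "{t \<in> S. t < ?P} = S - {?P}" using le_P[OF S] by force
    then show ?thesis by (simp add: smultB_apply zeroB_apply)
  qed
  finally show "dext n D (bas S) U = (if ?P \<in> S then
      smultB ((-1) ^ card (S - {?P})) (wedge n (D ?P) (bas (S - {?P}))) else zeroB) U" .
qed

lemma reindexP:
  assumes "P \<in> gens n"
  shows "(\<Sum>S\<in>Pow (gens n). if P \<in> S then F S else 0) = (\<Sum>T\<in>Pow (gens n). if P \<notin> T then F (insert P T) else (0::complex))"
proof -
  have "(\<Sum>S\<in>Pow (gens n). if P \<in> S then F S else 0) = (\<Sum>S\<in>{S \<in> Pow (gens n). P \<in> S}. F S)"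
    by (rule sum.inter_filter[symmetric]) simp
  also have "\<dots> = (\<Sum>T\<in>{T \<in> Pow (gens n). P \<notin> T}. F (insert P T))"
    by (rule sum.reindex_bij_witness[of _ "insert P" "\<lambda>S. S - {P}"]) (use assms in \<open>auto simp: insert_absorb\<close>)
  also have "\<dots> = (\<Sum>T\<in>Pow (gens n). if P \<notin> T then F (insert P T) else 0)"
    by (rule sum.inter_filter) simp
  finally show ?thesis .
qed

lemma wedge_shift:
  assumes F: "supp n F" "\<And>U. F U \<noteq> 0 \<Longrightarrow> Suc n + n \<notin> U" and R: "R \<subseteq> gens n" "Suc n + n \<notin> R"
  shows "Suc n + n \<notin> V \<Longrightarrow> wedge n F (bas (insert (Suc n + n) R)) (insert (Suc n + n) V) = wedge n F (bas R) V"
    and "Suc n + n \<in> V \<Longrightarrow> wedge n F (bas R) V = 0"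
proof -
  let ?P = "Suc n + n"
  have FF: "F = lc (Pow (gens n)) F bas" using expand F(1) by blast
  have iR: "insert ?P R \<subseteq> gens n" using R P_in_gens by auto
  have A: "\<And>X U. X \<subseteq> gens n \<Longrightarrow> wedge n F (bas X) U = (\<Sum>B\<in>Pow (gens n). F B * (if B \<inter> X = {} \<and> B \<union> X = U then (-1) ^ ninv B X else 0))"
    by (subst FF, subst wedge_left_lc, simp, unfold lc_def, intro sum.cong refl) (simp add: wedge_bas)
  show "wedge n F (bas (insert ?P R)) (insert ?P V) = wedge n F (bas R) V" if PV: "?P \<notin> V"
    unfolding A[OF iR] A[OF R(1)]
  proof (intro sum.cong refl)
    fix B assume B: "B \<in> Pow (gens n)"
    show "F B * (if B \<inter> insert ?P R = {} \<and> B \<union> insert ?P R = insert ?P V then (-1) ^ ninv B (insert ?P R) else 0) =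
          F B * (if B \<inter> R = {} \<and> B \<union> R = V then (-1) ^ ninv B R else 0)"
    proof (cases "F B = 0")
      case False
      then have PB: "?P \<notin> B" using F(2) by blast
      have fB: "finite B" using B finite_subset[OF _ finite_gens] by auto
      have fR: "finite R" using R finite_subset[OF _ finite_gens] by auto
      have "ninv B (insert ?P R) = ninv B R + ninv B {?P}"
        using ninv_union_right[of B "{?P}" R] fB fR R by auto
      moreover have "ninv B {?P} = 0"
      proof -
        have "{t \<in> B. ?P < t} = {}" using le_P[of B n] B by force
        then show ?thesis unfolding ninv_single_right by (metis card.empty)
      qed
      moreover have "(B \<inter> insert ?P R = {} \<and> B \<union> insert ?P R = insert ?P V) \<longleftrightarrow> (B \<inter> R = {} \<and> B \<union> R = V)"
        using PB R(2) PV by blast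
      ultimately show ?thesis by simp
    qed simp
  qed
  show "wedge n F (bas R) V = 0" if PV: "?P \<in> V"
    unfolding A[OF R(1)]
  proof (intro sum.neutral ballI)
    fix B assume B: "B \<in> Pow (gens n)"
    show "F B * (if B \<inter> R = {} \<and> B \<union> R = V then (-1) ^ ninv B R else 0) = 0"
      using F(2)[of B] R(2) PV by auto
  qed
qed


lemma sum_nz: "(\<Sum>i\<in>I. f i) \<noteq> (0::complex) \<Longrightarrow> \<exists>i\<in>I. f i \<noteq> 0"
  by (metis sum.neutral)

lemma dext_shift:
  assumes D1: "\<And>s. supp n (D s)" and D2: "\<And>s U. D s U \<noteq> 0 \<Longrightarrow> Suc n + n \<notin> U"
    and D3: "D (Suc n + n) = zeroB" and T: "T \<subseteq> gens n" "Suc n + n \<notin> T"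
  shows "Suc n + n \<notin> U \<Longrightarrow> dext n D (bas (insert (Suc n + n) T)) (insert (Suc n + n) U) = dext n D (bas T) U"
    and "Suc n + n \<in> U \<Longrightarrow> dext n D (bas T) U = 0"
proof -
  let ?P = "Suc n + n"
  have fT: "finite T" using finite_subset[OF T(1) finite_gens] .
  have iT: "insert ?P T \<subseteq> gens n" using T P_in_gens by auto
  show "dext n D (bas (insert ?P T)) (insert ?P U) = dext n D (bas T) U" if PU: "?P \<notin> U"
  proof -
    have "dext n D (bas (insert ?P T)) (insert ?P U) =
       (\<Sum>s\<in>insert ?P T. (-1) ^ card {t \<in> insert ?P T. t < s} * wedge n (D s) (bas (insert ?P T - {s})) (insert ?P U))"
      unfolding dext_bas[OF iT] lc_def ..
    also have "\<dots> = (\<Sum>s\<in>T. (-1) ^ card {t \<in> insert ?P T. t < s} * wedge n (D s) (bas (insert ?P T - {s})) (insert ?P U))"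
      using fT T(2) D3 by (simp add: zeroB_apply)
    also have "\<dots> = (\<Sum>s\<in>T. (-1) ^ card {t \<in> T. t < s} * wedge n (D s) (bas (T - {s})) U)"
    proof (intro sum.cong refl)
      fix s assume s: "s \<in> T"
      have sP: "s \<noteq> ?P" using s T(2) by auto
      have "{t \<in> insert ?P T. t < s} = {t \<in> T. t < s}" using le_P[OF T(1) s] by auto
      moreover have "insert ?P T - {s} = insert ?P (T - {s})" using sP by auto
      moreover have "wedge n (D s) (bas (insert ?P (T - {s}))) (insert ?P U) = wedge n (D s) (bas (T - {s})) U"
        using wedge_shift(1)[OF D1[of s] D2[of s], where R = "T - {s}" and V = U] T PU by auto
      ultimately show "(-1) ^ card {t \<in> insert ?P T. t < s} * wedge n (D s) (bas (insert ?P T - {s})) (insert ?P U) =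
          (-1) ^ card {t \<in> T. t < s} * wedge n (D s) (bas (T - {s})) U" by simp
    qed
    also have "\<dots> = dext n D (bas T) U" unfolding dext_bas[OF T(1)] lc_def ..
    finally show ?thesis .
  qed
  show "dext n D (bas T) U = 0" if PU: "?P \<in> U"
    unfolding dext_bas[OF T(1)] lc_def
  proof (intro sum.neutral ballI)
    fix s assume s: "s \<in> T"
    have "wedge n (D s) (bas (T - {s})) U = 0"
      using wedge_shift(2)[OF D1[of s] D2[of s], where R = "T - {s}" and V = U] T PU by auto
    then show "(-1) ^ card {t \<in> T. t < s} * wedge n (D s) (bas (T - {s})) U = 0" by simp
  qed
qed

lemma dbar_gen_props:
  shows "evsupp n (dbar_gen n E s)"
    and "dbar_gen n E s U \<noteq> 0 \<Longrightarrow> Suc n + n \<notin> U"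
    and "dbar_gen n E (Suc n + n) = zeroB"
proof -
  have key: "\<exists>k<n. U = {n, Suc n + k}" if nz: "dbar_gen n E s U \<noteq> 0" for U
  proof -
    have sn: "s \<le> n" using nz by (auto simp: dbar_gen_def zeroB_def split: if_splits)
    then obtain k l where kl: "k \<le> n" "l \<le> n" "acoef n E l k s * wedge n (bas {vidx n l}) (bas {fidx n k}) U \<noteq> 0"
      using nz unfolding dbar_gen_def by (auto dest!: sum_nz)
    then have a: "l = n" "k < n" by (auto simp: acoef_def split: if_splits)
    have g: "{l} \<subseteq> gens n" "{Suc n + k} \<subseteq> gens n" using a by (auto simp: gens_def)
    have "U = {l} \<union> {Suc n + k}" using kl(3) wedge_bas[OF g, of U] by (auto simp: vidx_def fidx_def split: if_splits)
    then show ?thesis using a by auto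
  qed
  show "evsupp n (dbar_gen n E s)"
    unfolding evsupp_def
  proof (intro allI impI)
    fix U assume "dbar_gen n E s U \<noteq> 0"
    then obtain k where "k < n" "U = {n, Suc n + k}" using key by blast
    then show "U \<subseteq> gens n \<and> even (card U)" by (auto simp: gens_def)
  qed
  show "Suc n + n \<notin> U" if "dbar_gen n E s U \<noteq> 0" using key[OF that] by auto
  show "dbar_gen n E (Suc n + n) = zeroB" by (simp add: dbar_gen_def)
qed


lemma supp_wedge: "supp n (wedge n f g)"
  unfolding supp_def
proof (intro allI impI)
  fix U assume a: "wedge n f g U \<noteq> 0"
  from sum_nz[OF a[unfolded wedge_def]] obtain S where S: "S \<in> Pow (gens n)" and
    b: "(\<Sum>T\<in>Pow (gens n). if S \<inter> T = {} \<and> S \<union> T = U then (-1) ^ ninv S T * f S * g T else 0) \<noteq> 0" ..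
  from sum_nz[OF b] obtain T where T: "T \<in> Pow (gens n)" and
    c: "(if S \<inter> T = {} \<and> S \<union> T = U then (-1) ^ ninv S T * f S * g T else 0) \<noteq> (0::complex)" ..
  from c have "S \<union> T = U" by (cases "S \<inter> T = {} \<and> S \<union> T = U") auto
  then show "U \<subseteq> gens n" using S T by auto
qed

lemma supp_addB: "supp n f \<Longrightarrow> supp n g \<Longrightarrow> supp n (addB f g)"
  unfolding supp_def addB_def
proof (intro allI impI)
  fix U assume "\<forall>U. f U \<noteq> 0 \<longrightarrow> U \<subseteq> gens n" "\<forall>U. g U \<noteq> 0 \<longrightarrow> U \<subseteq> gens n" "f U + g U \<noteq> 0"
  moreover have "f U \<noteq> 0 \<or> g U \<noteq> 0" using \<open>f U + g U \<noteq> 0\<close> by auto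
  ultimately show "U \<subseteq> gens n" by blast
qed

lemma card_split: "finite U \<Longrightarrow> card U = card (U \<inter> {..n}) + card (U - {..n})"
  by (rule card_Int_Diff)

lemma inB_supp: "inB n a b x \<Longrightarrow> supp n x"
  unfolding inB_def supp_def by auto

lemma inB_smult: "inB n a b x \<Longrightarrow> inB n a b (smultB c x)"
  unfolding inB_def smultB_def by auto

lemma inB_wedge:
  assumes x: "inB n a b x" and y: "inB n c d y"
  shows "inB n (a + c) (b + d) (wedge n x y)"
  unfolding inB_def
proof (intro allI impI)
  fix U assume a: "wedge n x y U \<noteq> 0"
  from sum_nz[OF a[unfolded wedge_def]] obtain S where S: "S \<in> Pow (gens n)" and
    b: "(\<Sum>T\<in>Pow (gens n). if S \<inter> T = {} \<and> S \<union> T = U then (-1) ^ ninv S T * x S * y T else 0) \<noteq> 0" ..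
  from sum_nz[OF b] obtain T where T: "T \<in> Pow (gens n)" and
    c: "(if S \<inter> T = {} \<and> S \<union> T = U then (-1) ^ ninv S T * x S * y T else 0) \<noteq> (0::complex)" ..
  have ST: "S \<in> Pow (gens n)" "T \<in> Pow (gens n)" using S T by auto
  from c have d0: "S \<inter> T = {} \<and> S \<union> T = U" by (cases "S \<inter> T = {} \<and> S \<union> T = U") auto
  with c have "(-1) ^ ninv S T * x S * y T \<noteq> 0" by simp
  then have "x S \<noteq> 0" "y T \<noteq> 0" by auto
  with d0 have d: "S \<inter> T = {}" "S \<union> T = U" "x S \<noteq> 0" "y T \<noteq> 0" by auto
  have fS: "finite S" "finite T" using ST finite_subset[OF _ finite_gens] by auto
  have cS: "card (S \<inter> {..n}) = a" "card (S - {..n}) = b" using x d unfolding inB_def by auto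
  have cT: "card (T \<inter> {..n}) = c" "card (T - {..n}) = d" using y d unfolding inB_def by auto
  have "U \<inter> {..n} = (S \<inter> {..n}) \<union> (T \<inter> {..n})" "U - {..n} = (S - {..n}) \<union> (T - {..n})" using d by auto
  moreover have "card ((S \<inter> {..n}) \<union> (T \<inter> {..n})) = a + c"
    using fS d(1) cS cT card_Un_disjoint[of "S \<inter> {..n}" "T \<inter> {..n}"] by auto
  moreover have "card ((S - {..n}) \<union> (T - {..n})) = b + d"
    using fS d(1) cS cT card_Un_disjoint[of "S - {..n}" "T - {..n}"] by auto
  ultimately show "U \<subseteq> gens n \<and> card (U \<inter> {..n}) = a + c \<and> card (U - {..n}) = b + d"
    using ST d by auto
qed

lemma ad_gen_zero:
  assumes "s \<in> gens n" "s \<noteq> Suc n + n"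
  shows "ad_gen n E X Y s = zeroB"
proof (cases "s \<le> n")
  case True then show ?thesis by (simp add: ad_gen_def)
next
  case False
  then have l: "s - Suc n \<noteq> n" using assms by (auto simp: gens_def)
  have "\<And>Z. brVF n E Z (s - Suc n) = zeroB"
    unfolding brVF_def formB_def zeroB_def using l by (simp add: bcoef_def)
  then show ?thesis using False by (simp add: ad_gen_def) (simp add: addB_def zeroB_def)
qed

lemma supp_ad_gen: "supp n (ad_gen n E X Y s)"
  unfolding ad_gen_def using supp_addB[OF supp_wedge supp_wedge] by (auto simp: supp_def zeroB_def)


theorem mainTheorem9:
  fixes n :: nat and E :: "nat \<Rightarrow> nat \<Rightarrow> complex"
    and w r :: complex and t :: "nat \<Rightarrow> complex"
  assumes lattice: "has_lattice n E"
    and two_step: "\<exists>k<n. \<exists>j<n. E k j \<noteq> 0"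
    and centre: "centre_is_W n E"
    and r_nz: "r \<noteq> 0"
    and hyp: "dbar_exact n E 1 1
                (adL n E (\<lambda>j. if j = n then w else 0) (\<lambda>j. if j < n then t j else 0)
                   (smultB r (bas {fidx n n})))"
  shows "\<forall>p q f. dbar_closed n E p q f \<longrightarrow>
           dbar_exact n E (p + 1) q
             (adL n E (\<lambda>j. if j = n then w else 0) (\<lambda>j. if j < n then t j else 0) f)"
proof (intro allI impI)
  fix p q f assume cl: "dbar_closed n E p q f"
  let ?P = "Suc n + n"
  let ?X = "\<lambda>j. if j = n then w else (0::complex)"
  let ?Y = "\<lambda>j. if j < n then t j else (0::complex)"
  let ?D = "ad_gen n E ?X ?Y"
  let ?G = "?D ?P"
  let ?ad = "adL n E ?X ?Y"
  let ?PG = "Pow (gens n)"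
  have Z: "\<And>s. s \<in> gens n \<Longrightarrow> s \<noteq> ?P \<Longrightarrow> ?D s = zeroB" by (rule ad_gen_zero)
  have Gs: "supp n ?G" by (rule supp_ad_gen)
  have adbas: "\<And>S. S \<subseteq> gens n \<Longrightarrow> ?ad (bas S) = (if ?P \<in> S then
      smultB ((-1) ^ card (S - {?P})) (wedge n ?G (bas (S - {?P}))) else zeroB)"
    unfolding adL_def by (rule dext_onlyP[OF Z])
  have "?ad (bas {?P}) = ?G"
  proof -
    have "?ad (bas {?P}) = smultB 1 (wedge n ?G (bas {}))" using adbas[of "{?P}"] P_in_gens by simp
    also have "\<dots> = ?G" using wedge_empty_right[OF Gs] by (simp add: smultB_def)
    finally show ?thesis .
  qed
  then have adP: "?ad (smultB r (bas {fidx n n})) = smultB r ?G"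
    by (simp add: adL_def dext_smult fidx_def)
  from hyp obtain g where g: "inB n 1 0 g" "dbar n E g = smultB r ?G" and GinB': "inB n 1 1 (smultB r ?G)"
    unfolding dbar_exact_def adP by auto
  have GinB: "inB n 1 1 ?G" using GinB' r_nz unfolding inB_def smultB_def by auto
  have g1: "\<exists>x\<in>gens n. A = {x}" if gA: "g A \<noteq> 0" for A
  proof -
    have A: "A \<subseteq> gens n" "card (A \<inter> {..n}) = 1" "card (A - {..n}) = 0" using g(1) gA by (auto simp: inB_def)
    then have "card A = 1" using card_split[of A n] finite_subset[OF A(1) finite_gens] by simp
    then obtain x where "A = {x}" by (rule card_1_singletonE)
    with A show ?thesis by auto
  qed
  from cl have fB: "inB n p q f" and fz: "dbar n E f = zeroB" by (auto simp: dbar_closed_def)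
  define h where "h = (\<lambda>U. if U \<subseteq> gens n \<and> ?P \<notin> U then f (insert ?P U) else 0)"
  define \<sigma> :: complex where "\<sigma> = (-1) ^ (p + q - 1)"
  have hs: "supp n h" by (auto simp: supp_def h_def)
  have cardf: "card T = p + q - 1 \<and> card (T \<inter> {..n}) = p \<and> card (T - {..n}) = q - 1 \<and> q \<noteq> 0"
    if T: "T \<subseteq> gens n" "?P \<notin> T" and nz: "f (insert ?P T) \<noteq> 0" for T
  proof -
    have fT: "finite T" using finite_subset[OF T(1) finite_gens] .
    have c: "card (insert ?P T \<inter> {..n}) = p" "card (insert ?P T - {..n}) = q"
      using fB nz unfolding inB_def by auto
    have "insert ?P T \<inter> {..n} = T \<inter> {..n}" by auto
    moreover have "insert ?P T - {..n} = insert ?P (T - {..n})" by auto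
    moreover have "card (insert ?P (T - {..n})) = Suc (card (T - {..n}))" using fT T(2) by simp
    ultimately have "card (T \<inter> {..n}) = p" "card (T - {..n}) = q - 1" "q \<noteq> 0" using c by auto
    moreover have "card T = card (T \<inter> {..n}) + card (T - {..n})" using card_split fT by blast
    ultimately show ?thesis by auto
  qed
  have hB: "inB n p (q - 1) h"
    unfolding inB_def h_def using cardf by auto
  have hq: "q = 0 \<Longrightarrow> h = zeroB"
    unfolding h_def zeroB_def using cardf by (intro ext) auto
  have F: "f = lc ?PG f bas" using expand inB_supp[OF fB] by blast
  have H: "h = lc ?PG h bas" using expand hs by blast
  have adf: "?ad f = smultB \<sigma> (wedge n ?G h)"
  proof (rule ext)
    fix U
    have "?ad f U = (\<Sum>S\<in>?PG. f S * ?ad (bas S) U)"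
      by (subst F) (simp add: adL_def dext_lc, simp add: lc_def)
    also have "\<dots> = (\<Sum>S\<in>?PG. if ?P \<in> S then f S * ((-1) ^ card (S - {?P}) * wedge n ?G (bas (S - {?P})) U) else 0)"
      by (intro sum.cong refl) (simp add: adbas smultB_apply zeroB_apply)
    also have "\<dots> = (\<Sum>T\<in>?PG. if ?P \<notin> T then f (insert ?P T) * ((-1) ^ card (insert ?P T - {?P}) * wedge n ?G (bas (insert ?P T - {?P})) U) else 0)"
      by (rule reindexP[OF P_in_gens])
    also have "\<dots> = (\<Sum>T\<in>?PG. \<sigma> * (h T * wedge n ?G (bas T) U))"
    proof (intro sum.cong refl)
      fix T assume T: "T \<in> ?PG"
      show "(if ?P \<notin> T then f (insert ?P T) * ((-1) ^ card (insert ?P T - {?P}) * wedge n ?G (bas (insert ?P T - {?P})) U) else 0) =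
            \<sigma> * (h T * wedge n ?G (bas T) U)"
      proof (cases "?P \<notin> T \<and> f (insert ?P T) \<noteq> 0")
        case True
        then have "insert ?P T - {?P} = T" by auto
        moreover have "card T = p + q - 1" using cardf[of T] T True by auto
        ultimately show ?thesis using True T by (simp add: h_def \<sigma>_def)
      next
        case False
        then show ?thesis using T by (auto simp: h_def)
      qed
    qed
    also have "\<dots> = smultB \<sigma> (wedge n ?G h) U"
    proof -
      have "wedge n ?G h = lc ?PG h (\<lambda>T. wedge n ?G (bas T))"
        by (subst H) (simp add: wedge_right_lc)
      then show ?thesis by (simp add: smultB_apply lc_def sum_distrib_left)
    qed
    finally show "?ad f U = smultB \<sigma> (wedge n ?G h) U" .
  qed
  have D1: "\<And>s. supp n (dbar_gen n E s)" using dbar_gen_props(1) evsupp_supp by blast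
  have D2: "\<And>s U. dbar_gen n E s U \<noteq> 0 \<Longrightarrow> ?P \<notin> U" using dbar_gen_props(2) by blast
  have D3: "dbar_gen n E ?P = zeroB" using dbar_gen_props(3) by blast
  have dh: "dbar n E h = zeroB"
  proof (rule ext)
    fix U
    have dhU: "dbar n E h U = (\<Sum>T\<in>?PG. h T * dbar n E (bas T) U)"
      by (subst H) (simp add: dbar_def dext_lc, simp add: lc_def)
    show "dbar n E h U = zeroB U"
    proof (cases "?P \<in> U")
      case True
      have "dbar n E h U = 0" unfolding dhU
      proof (intro sum.neutral ballI)
        fix T assume T: "T \<in> ?PG"
        show "h T * dbar n E (bas T) U = 0"
        proof (cases "?P \<in> T")
          case False
          then have "dbar n E (bas T) U = 0" unfolding dbar_def
            using dext_shift(2)[where D = "dbar_gen n E" and T = T and U = U, OF D1 D2 D3] T True by auto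
          then show ?thesis by simp
        qed (simp add: h_def)
      qed
      then show ?thesis by (simp add: zeroB_apply)
    next
      case False
      have "0 = dbar n E f (insert ?P U)" using fz by (simp add: zeroB_apply)
      also have "\<dots> = (\<Sum>S\<in>?PG. f S * dbar n E (bas S) (insert ?P U))"
        by (subst F) (simp add: dbar_def dext_lc, simp add: lc_def)
      also have "\<dots> = (\<Sum>S\<in>?PG. if ?P \<in> S then f S * dbar n E (bas S) (insert ?P U) else 0)"
      proof (intro sum.cong refl)
        fix S assume S: "S \<in> ?PG"
        show "f S * dbar n E (bas S) (insert ?P U) = (if ?P \<in> S then f S * dbar n E (bas S) (insert ?P U) else 0)"
        proof (cases "?P \<in> S")
          case False
          then have "dbar n E (bas S) (insert ?P U) = 0" unfolding dbar_def
            using dext_shift(2)[where D = "dbar_gen n E" and T = S and U = "insert ?P U", OF D1 D2 D3] S by auto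
          then show ?thesis by simp
        qed simp
      qed
      also have "\<dots> = (\<Sum>T\<in>?PG. if ?P \<notin> T then f (insert ?P T) * dbar n E (bas (insert ?P T)) (insert ?P U) else 0)"
        by (rule reindexP[OF P_in_gens])
      also have "\<dots> = (\<Sum>T\<in>?PG. h T * dbar n E (bas T) U)"
      proof (intro sum.cong refl)
        fix T assume T: "T \<in> ?PG"
        show "(if ?P \<notin> T then f (insert ?P T) * dbar n E (bas (insert ?P T)) (insert ?P U) else 0) = h T * dbar n E (bas T) U"
        proof (cases "?P \<in> T")
          case False
          then have "dbar n E (bas (insert ?P T)) (insert ?P U) = dbar n E (bas T) U" unfolding dbar_def
            using dext_shift(1)[where D = "dbar_gen n E" and T = T and U = U, OF D1 D2 D3] T \<open>?P \<notin> U\<close> by auto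
          then show ?thesis using False T by (simp add: h_def)
        qed (simp add: h_def)
      qed
      finally show ?thesis using dhU by (simp add: zeroB_apply)
    qed
  qed
  show "dbar_exact n E (p + 1) q (?ad f)"
  proof (cases "q = 0")
    case True
    then have "?ad f = zeroB" using adf hq by simp
    then show ?thesis using True by (simp add: dbar_exact_def inB_def zeroB_def)
  next
    case False
    have i1: "inB n (p + 1) q (?ad f)"
      using inB_smult[OF inB_wedge[OF GinB hB], of \<sigma>] adf False by (simp add: add.commute)
    define e where "e = smultB (\<sigma> / r) (wedge n g h)"
    have i2: "inB n (p + 1) (q - 1) e"
      using inB_smult[OF inB_wedge[OF g(1) hB]] unfolding e_def by (simp add: add.commute)
    have ev: "\<And>s. evsupp n (dbar_gen n E s)" by (rule dbar_gen_props(1))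
    have "dbar n E (wedge n g h) = addB (wedge n (dbar n E g) h) (smultB (-1) (wedge n g (dbar n E h)))"
      unfolding dbar_def by (rule leib_gen[OF ev inB_supp[OF g(1)] g1 hs])
    then have "dbar n E (wedge n g h) = addB (wedge n (smultB r ?G) h) (smultB (-1) (wedge n g zeroB))"
      using g(2) dh by simp
    then have dw: "dbar n E (wedge n g h) = addB (smultB r (wedge n ?G h)) zeroB"
      by (simp add: wedge_smult_left)
    have "dbar n E e = ?ad f"
    proof (rule ext)
      fix U
      have "dbar n E e U = (\<sigma> / r) * dbar n E (wedge n g h) U"
        unfolding e_def dbar_def dext_smult smultB_apply ..
      also have "\<dots> = (\<sigma> / r) * (r * wedge n ?G h U)"
        using dw by (simp add: addB_apply smultB_apply zeroB_apply)
      also have "\<dots> = \<sigma> * wedge n ?G h U" using r_nz by simp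
      finally show "dbar n E e U = ?ad f U" unfolding adf smultB_apply .
    qed
    then show ?thesis using i1 i2 False unfolding dbar_exact_def by auto
  qed
qed

end
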